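(* Let $\Phi$ be a periodic map cocycle of period $R$ generated by expanding maps of $I$ over $\Omega=\{\omega,\sigma\omega,\dots,\sigma^{R-1}\omega\}$, with Perron--Frobenius cocycle $\mathcal P$. If $\eta\in\mathbb R$ is an eigenvalue of $\mathcal P^{(R)}(\omega)$ acting on $\mathrm{BV}$ (i.e. $\mathcal P^{(R)}(\omega)f=\eta f$ for some $0\neq f\in\mathrm{BV}$), then $$\frac{\log|\eta|}{R}\in\Lambda(\mathcal P(\omega)).$$
   Context: $I=[0,1]$ or $S^1$; $m$ Lebesgue measure. Expanding map: $T:I\to I$ with finite partition $0=a_0<\dots<a_M=1$, continuous on each $(a_{i-1},a_i)$, extending $C^2$ to the closed interval with $|DT|>1$. Perron--Frobenius operator $\mathcal Pf(x)=\sum_{y\in T^{-1}(x)}f(y)/|DT(y)|$ on $\mathrm{BV}$ (real $f\in L^\infty(m)$ of bounded variation modulo null sets, norm $\|f\|=\max\{\|f\|_{L^1},\mathrm{var} f\}$). For maps $\{T_i\}_{i\in Z_K}$ and a shift-invariant $\Omega\subset Z_K^{\mathbb Z}$ with left shift $\sigma$, $\mathcal P^{(n)}(\omega)=\mathcal P_{\omega_{n-1}}\cdots\mathcal P_{\omega_0}$, $\mathcal P_i$ the operator of $T_i$. The cocycle is periodic of period $R$ if $\Omega=\{\omega,\sigma\omega,\dots,\sigma^{R-1}\omega\}$. $\Lambda(\mathcal P(\omega))=\{\limsup_n\frac1n\log\|\mathcal P^{(n)}(\omega)f\|: f\in\mathrm{BV}\}$, with $\log 0=-\infty$. *)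

theory Defs
  imports "HOL-Analysis.Analysis"
begin

definition expanding_map :: "(real \<Rightarrow> real) \<Rightarrow> bool" where
  "expanding_map T \<longleftrightarrow>
     (\<forall>x\<in>{0..1}. T x \<in> {0..1}) \<and>
     (\<exists>M a. M \<ge> 1 \<and> a 0 = 0 \<and> a M = 1 \<and> (\<forall>i<M. a i < a (Suc i)) \<and>
        (\<forall>i<M. continuous_on {a i<..<a (Suc i)} T \<and>
           (\<exists>g g' g''. (\<forall>x\<in>{a i<..<a (Suc i)}. g x = T x) \<and>
              (\<forall>x\<in>{a i..a (Suc i)}.
                 (g has_real_derivative g' x) (at x within {a i..a (Suc i)}) \<and>
                 (g' has_real_derivative g'' x) (at x within {a i..a (Suc i)}) \<and>
                 \<bar>g' x\<bar> > 1) \<and>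
              continuous_on {a i..a (Suc i)} g'')))"

text \<open>Perron--Frobenius operator (pointwise on representatives; the finitely many
non-differentiability points are irrelevant modulo null sets).\<close>
definition PF :: "(real \<Rightarrow> real) \<Rightarrow> (real \<Rightarrow> real) \<Rightarrow> real \<Rightarrow> real" where
  "PF T f x = (\<Sum>y\<in>{y. 0 < y \<and> y < 1 \<and> T y = x \<and> T differentiable (at y)}.
                 f y / \<bar>deriv T y\<bar>)"

fun PFn :: "(nat \<Rightarrow> real \<Rightarrow> real) \<Rightarrow> (int \<Rightarrow> nat) \<Rightarrow> nat \<Rightarrow> (real \<Rightarrow> real) \<Rightarrow> real \<Rightarrow> real" where
  "PFn T \<omega> 0 f = f"
| "PFn T \<omega> (Suc n) f = PF (T (\<omega> (int n))) (PFn T \<omega> n f)"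

abbreviation mI :: "real measure" where
  "mI \<equiv> lebesgue_on {0..1}"

definition pvar :: "(real \<Rightarrow> real) \<Rightarrow> ereal" where
  "pvar g = (SUP p \<in> {(n, x::nat \<Rightarrow> real). (\<forall>k\<le>n. x k \<in> {0..1}) \<and> (\<forall>k<n. x k \<le> x (Suc k))}.
               ereal (\<Sum>k<fst p. \<bar>g (snd p (Suc k)) - g (snd p k)\<bar>))"

definition evar :: "(real \<Rightarrow> real) \<Rightarrow> ereal" where
  "evar f = (INF g \<in> {g. AE x in mI. g x = f x}. pvar g)"

definition BV :: "(real \<Rightarrow> real) \<Rightarrow> bool" where
  "BV f \<longleftrightarrow> f \<in> borel_measurable mI \<and> (\<exists>C. AE x in mI. \<bar>f x\<bar> \<le> C) \<and> evar f < \<infinity>"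

definition L1norm :: "(real \<Rightarrow> real) \<Rightarrow> real" where
  "L1norm f = integral\<^sup>L mI (\<lambda>x. \<bar>f x\<bar>)"

definition bvnorm :: "(real \<Rightarrow> real) \<Rightarrow> real" where
  "bvnorm f = max (L1norm f) (real_of_ereal (evar f))"

definition elog :: "real \<Rightarrow> ereal" where
  "elog x = (if x = 0 then -\<infinity> else ereal (ln x))"

definition lyap_spectrum :: "(nat \<Rightarrow> real \<Rightarrow> real) \<Rightarrow> (int \<Rightarrow> nat) \<Rightarrow> ereal set" where
  "lyap_spectrum T \<omega> =
     {limsup (\<lambda>n. elog (bvnorm (PFn T \<omega> n f)) / ereal (real n)) | f. BV f}"

end

theory Submission
  imports Defs
begin

lemma AE_mI_iff: "(AE x in mI. P x) \<longleftrightarrow> (\<exists>N. negligible N \<and> (\<forall>x\<in>{0..1}. x \<notin> N \<longrightarrow> P x))"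
proof -
  have "(AE x in mI. P x) \<longleftrightarrow> (AE x in lebesgue. x \<in> {0..1} \<longrightarrow> P x)"
    by (rule AE_restrict_space_iff) auto
  also have "\<dots> \<longleftrightarrow> (\<exists>N. negligible N \<and> {x. \<not> (x \<in> {0..1} \<longrightarrow> P x)} \<subseteq> N)"
    by (rule eventually_ae_filter_negligible)
  finally show ?thesis by (simp add: subset_eq) (metis atLeastAtMost_iff)
qed

lemma PF_AE:
  assumes "AE x in mI. f x = g x"
  shows "AE x in mI. PF T f x = PF T g x"
proof -
  obtain N where N: "negligible N" "\<And>x. x\<in>{0..1} \<Longrightarrow> x \<notin> N \<Longrightarrow> f x = g x"
    using assms unfolding AE_mI_iff by blast
  define S where "S = N \<inter> {y. T differentiable (at y)}"
  have "negligible S" unfolding S_def using N(1) negligible_subset by blast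
  moreover have "T differentiable_on S"
    unfolding S_def differentiable_on_def by (auto intro: differentiable_at_withinI)
  ultimately have neg: "negligible (T ` S)"
    by (intro negligible_differentiable_image_negligible) auto
  show ?thesis unfolding AE_mI_iff
  proof (intro exI conjI ballI impI)
    show "negligible (T ` S)" by fact
    fix x assume x: "x \<notin> T ` S"
    show "PF T f x = PF T g x" unfolding PF_def
    proof (rule sum.cong[OF refl])
      fix y assume y: "y \<in> {y. 0 < y \<and> y < 1 \<and> T y = x \<and> T differentiable (at y)}"
      then have "y \<notin> N" using x unfolding S_def by auto
      with y N(2)[of y] show "f y / \<bar>deriv T y\<bar> = g y / \<bar>deriv T y\<bar>" by auto
    qed
  qed
qed

lemma PF_scale: "PF T (\<lambda>x. c * f x) = (\<lambda>x. c * PF T f x)"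
  unfolding PF_def by (auto simp: sum_distrib_left)

lemma PFn_scale: "PFn T \<omega> n (\<lambda>x. c * f x) = (\<lambda>x. c * PFn T \<omega> n f x)"
  by (induction n) (auto simp: PF_scale)

lemma PFn_AE: assumes "AE x in mI. f x = g x" shows "AE x in mI. PFn T \<omega> n f x = PFn T \<omega> n g x"
proof (induction n)
  case 0 then show ?case using assms by simp
next
  case (Suc n) then show ?case by (simp add: PF_AE)
qed

lemma PFn_add: "PFn T \<omega> (n + m) f = PFn T (\<lambda>k. \<omega> (k + int m)) n (PFn T \<omega> m f)"
  by (induction n) (auto simp: add.commute)

lemma meas_AE_mI:
  fixes f g :: "real \<Rightarrow> real"
  assumes f: "f \<in> borel_measurable mI" and ae: "AE x in mI. f x = g x"
  shows "g \<in> borel_measurable mI"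
proof -
  have S: "{0..1::real} \<inter> space lebesgue \<in> sets lebesgue" by simp
  have "(\<lambda>x. indicator {0..1::real} x *\<^sub>R f x) \<in> borel_measurable lebesgue"
    using f borel_measurable_restrict_space_iff[OF S] by blast
  moreover have "AE x in lebesgue. x \<in> {0..1} \<longrightarrow> f x = g x"
    using AE_restrict_space_iff[OF S, of "\<lambda>x. f x = g x"] ae by simp
  then have "AE x in lebesgue. indicator {0..1::real} x *\<^sub>R f x = indicator {0..1::real} x *\<^sub>R g x"
    by eventually_elim (auto simp: indicator_def)
  ultimately have "(\<lambda>x. indicator {0..1::real} x *\<^sub>R g x) \<in> borel_measurable lebesgue"
    by (rule borel_measurable_AE)
  then show ?thesis using borel_measurable_restrict_space_iff[OF S] by blast
qed

lemma integral_AE_mI: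
  fixes f g :: "real \<Rightarrow> real"
  assumes ae: "AE x in mI. f x = g x"
  shows "integral\<^sup>L mI f = integral\<^sup>L mI g"
proof (cases "f \<in> borel_measurable mI")
  case True
  then have "g \<in> borel_measurable mI" using meas_AE_mI ae by blast
  then show ?thesis using True ae by (intro integral_cong_AE) auto
next
  case False
  have ae': "AE x in mI. g x = f x" using ae by auto
  then have "g \<notin> borel_measurable mI" using meas_AE_mI False by blast
  then show ?thesis using False by (metis borel_measurable_integrable not_integrable_integral_eq)
qed

lemma L1norm_AE: "AE x in mI. f x = g x \<Longrightarrow> L1norm f = L1norm g"
  unfolding L1norm_def by (rule integral_AE_mI) auto

lemma evar_AE: assumes "AE x in mI. f x = g x" shows "evar f = evar g"
proof -
  have "{h. AE x in mI. h x = f x} = {h. AE x in mI. h x = g x}"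
    using assms by (auto elim: eventually_elim2)
  then show ?thesis unfolding evar_def by simp
qed

lemma bvnorm_AE: "AE x in mI. f x = g x \<Longrightarrow> bvnorm f = bvnorm g"
  unfolding bvnorm_def using L1norm_AE evar_AE by metis

lemma pvar_nonneg: "0 \<le> pvar g"
proof -
  have "(0::nat, \<lambda>_. 0::real) \<in> {(n, x::nat \<Rightarrow> real). (\<forall>k\<le>n. x k \<in> {0..1}) \<and> (\<forall>k<n. x k \<le> x (Suc k))}"
    by auto
  then have "ereal (\<Sum>k<fst (0::nat, \<lambda>_. 0::real). \<bar>g (snd (0::nat, \<lambda>_. 0::real) (Suc k)) - g (snd (0::nat, \<lambda>_. 0::real) k)\<bar>) \<le> pvar g"
    unfolding pvar_def by (rule SUP_upper2) simp
  then show ?thesis by (simp flip: zero_ereal_def)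
qed

lemma pvar_scale: "pvar (\<lambda>x. c * g x) = ereal \<bar>c\<bar> * pvar g"
proof -
  have "pvar (\<lambda>x. c * g x) = (SUP p \<in> {(n, x::nat \<Rightarrow> real). (\<forall>k\<le>n. x k \<in> {0..1}) \<and> (\<forall>k<n. x k \<le> x (Suc k))}.
               ereal \<bar>c\<bar> * ereal (\<Sum>k<fst p. \<bar>g (snd p (Suc k)) - g (snd p k)\<bar>))"
    unfolding pvar_def
    by (rule SUP_cong) (auto simp: sum_distrib_left abs_mult simp flip: right_diff_distrib)
  also have "\<dots> = ereal \<bar>c\<bar> * pvar g" unfolding pvar_def
    by (rule SUP_ereal_mult_left) (auto intro!: sum_nonneg exI[of _ 0])
  finally show ?thesis .
qed

lemma ereal_mult_INF_le:
  fixes c :: real assumes "0 \<le> c"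
  shows "ereal c * (INF x\<in>A. f x) \<le> (INF x\<in>A. ereal c * f x)"
  by (rule INF_greatest) (intro ereal_mult_left_mono INF_lower, auto simp: assms)

lemma ereal_mult_INF:
  fixes c :: real assumes "0 < c"
  shows "ereal c * (INF x\<in>A. f x) = (INF x\<in>A. ereal c * f x)"
proof (rule antisym)
  show "ereal c * (INF x\<in>A. f x) \<le> (INF x\<in>A. ereal c * f x)"
    using assms by (intro ereal_mult_INF_le) auto
  have inv: "\<And>y. ereal (1/c) * (ereal c * y) = y"
    using assms by (simp flip: mult.assoc)
  have "ereal (1/c) * (INF x\<in>A. ereal c * f x) \<le> (INF x\<in>A. ereal (1/c) * (ereal c * f x))"
    using assms by (intro ereal_mult_INF_le) auto
  also have "\<dots> = (INF x\<in>A. f x)" by (simp add: inv)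
  finally have "ereal c * (ereal (1/c) * (INF x\<in>A. ereal c * f x)) \<le> ereal c * (INF x\<in>A. f x)"
    using assms by (intro ereal_mult_left_mono) auto
  then show "(INF x\<in>A. ereal c * f x) \<le> ereal c * (INF x\<in>A. f x)"
    using assms by (simp flip: mult.assoc)
qed

lemma evar_scale:
  assumes "c \<noteq> 0" shows "evar (\<lambda>x. c * f x) = ereal \<bar>c\<bar> * evar f"
proof -
  have eq: "{g. AE x in mI. g x = c * f x} = (\<lambda>g x. c * g x) ` {g. AE x in mI. g x = f x}"
  proof (intro set_eqI iffI)
    fix g assume "g \<in> {g. AE x in mI. g x = c * f x}"
    then have "(\<lambda>x. g x / c) \<in> {g. AE x in mI. g x = f x}" "g = (\<lambda>x. c * (g x / c))"
      using assms by (auto elim!: eventually_mono)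
    then show "g \<in> (\<lambda>g x. c * g x) ` {g. AE x in mI. g x = f x}"
      by (intro image_eqI[where x="\<lambda>x. g x / c"]) auto
  qed (auto elim!: eventually_mono)
  have "evar (\<lambda>x. c * f x) = (INF g\<in>{g. AE x in mI. g x = f x}. pvar (\<lambda>x. c * g x))"
    unfolding evar_def eq image_image ..
  also have "\<dots> = (INF g\<in>{g. AE x in mI. g x = f x}. ereal \<bar>c\<bar> * pvar g)"
    by (simp add: pvar_scale)
  also have "\<dots> = ereal \<bar>c\<bar> * evar f"
    unfolding evar_def using assms by (intro ereal_mult_INF[symmetric]) auto
  finally show ?thesis .
qed

lemma evar_zero: "evar (\<lambda>x. 0) = 0"
proof -
  have "evar (\<lambda>x. 0) \<le> pvar (\<lambda>x. 0)" unfolding evar_def by (rule INF_lower) auto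
  also have "pvar (\<lambda>x. 0) = 0" using pvar_scale[of 0 "\<lambda>x. 0"] by (simp flip: zero_ereal_def)
  finally show ?thesis unfolding evar_def
    by (metis (no_types, lifting) INF_greatest antisym evar_def pvar_nonneg)
qed

lemma L1norm_nonneg: "0 \<le> L1norm f"
  unfolding L1norm_def by (rule integral_nonneg_AE) auto

lemma bvnorm_nonneg: "0 \<le> bvnorm f"
  unfolding bvnorm_def using L1norm_nonneg by (simp add: le_max_iff_disj)

lemma bvnorm_scale: "bvnorm (\<lambda>x. c * f x) = \<bar>c\<bar> * bvnorm f"
proof (cases "c = 0")
  case True
  then show ?thesis by (simp add: bvnorm_def L1norm_def evar_zero)
next
  case False
  have "L1norm (\<lambda>x. c * f x) = \<bar>c\<bar> * L1norm f"
    unfolding L1norm_def by (simp add: abs_mult)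
  then show ?thesis unfolding bvnorm_def using False
    by (simp add: evar_scale max_mult_distrib_left)
qed


lemma limsup_lemma:
  fixes c b :: "nat \<Rightarrow> real" and e :: real and R :: nat
  assumes R: "R \<ge> 1" and c: "\<And>j. 0 \<le> c j" and c0: "0 < c 0" and e: "0 \<le> e"
    and b: "\<And>n. b n = e ^ (n div R) * c (n mod R)"
  shows "limsup (\<lambda>n. elog (b n) / ereal (real n)) = elog e / ereal (real R)"
proof (cases "e = 0")
  case True
  have ev: "eventually (\<lambda>n. elog (b n) / ereal (real n) \<le> -\<infinity>) sequentially"
    using eventually_ge_at_top[of R]
  proof eventually_elim
    case (elim n)
    then have "n div R \<ge> 1" using R using div_le_mono[of R n R] by simp
    then have "b n = 0" using b True by (simp add: power_0_left)
    moreover have "real n > 0" using elim R by simp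
    ultimately show ?case by (simp add: elog_def)
  qed
  have "limsup (\<lambda>n. elog (b n) / ereal (real n)) \<le> limsup (\<lambda>n. -\<infinity>::ereal)"
    by (rule Limsup_mono[OF ev])
  then have "limsup (\<lambda>n. elog (b n) / ereal (real n)) = -\<infinity>"
    by (simp add: Limsup_const)
  moreover have "elog e / ereal (real R) = -\<infinity>" using True R by (simp add: elog_def)
  ultimately show ?thesis by simp
next
  case False
  then have epos: "e > 0" using e by simp
  define L where "L = ln e"
  have Rpos: "real R > 0" using R by simp
  have rhs: "elog e / ereal (real R) = ereal (L / R)"
    using False Rpos by (simp add: elog_def L_def)
  define C where "C = (\<Sum>j<R. \<bar>ln (c j)\<bar>) + \<bar>L\<bar>"
  have up: "elog (b n) / ereal (real n) \<le> ereal (C / real n + L / R)" if n: "n > 0" for n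
  proof (cases "c (n mod R) = 0")
    case True
    then show ?thesis using b[of n] n by (simp add: elog_def)
  next
    case False
    define k j where "k = n div R" and "j = n mod R"
    have cj: "c j > 0" using False c[of j] unfolding j_def by simp
    have jR: "j < R" using R unfolding j_def by simp
    have nkj: "real n = real k * R + real j" unfolding k_def j_def
      by (metis div_mult_mod_eq of_nat_add of_nat_mult)
    have bn: "b n = e ^ k * c j" using b unfolding k_def j_def by simp
    have lnb: "ln (b n) = real k * L + ln (c j)"
      unfolding bn L_def using epos cj by (simp add: ln_mult ln_realpow)
    have "\<bar>ln (c j)\<bar> \<le> (\<Sum>j<R. \<bar>ln (c j)\<bar>)"
      by (rule member_le_sum) (use jR in auto)
    then have "ln (c j) \<le> (\<Sum>j<R. \<bar>ln (c j)\<bar>)" by linarith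
    moreover have "real k * L \<le> real n * L / R + \<bar>L\<bar>"
    proof -
      have "real k * L = real n * L / R - (real j / R) * L"
        using nkj Rpos by (simp add: field_simps)
      moreover have "- (real j / R) * L \<le> \<bar>L\<bar>"
      proof -
        have "\<bar>(real j / R) * L\<bar> \<le> 1 * \<bar>L\<bar>"
          unfolding abs_mult using jR Rpos by (intro mult_right_mono) auto
        then show ?thesis by linarith
      qed
      ultimately show ?thesis by linarith
    qed
    ultimately have "ln (b n) \<le> C + real n * L / R" unfolding C_def lnb by linarith
    then have "ln (b n) / real n \<le> C / real n + L / R"
      using n by (simp add: field_simps)
    moreover have "b n > 0" using bn epos cj by simp
    ultimately show ?thesis using n by (simp add: elog_def)
  qed
  have "(\<lambda>n. C / real n + L / R) \<longlonglongrightarrow> 0 + L / R"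
    by (intro tendsto_add lim_const_over_n tendsto_const)
  then have lim1: "(\<lambda>n. ereal (C / real n + L / R)) \<longlonglongrightarrow> ereal (L / R)"
    by (intro tendsto_ereal) simp
  have "limsup (\<lambda>n. elog (b n) / ereal (real n)) \<le> limsup (\<lambda>n. ereal (C / real n + L / R))"
    by (rule Limsup_mono) (use eventually_gt_at_top[of 0] in \<open>rule eventually_mono, use up in blast\<close>)
  also have "\<dots> = ereal (L / R)" by (rule lim_imp_Limsup[OF _ lim1]) simp
  finally have le: "limsup (\<lambda>n. elog (b n) / ereal (real n)) \<le> ereal (L / R)" .
  define r where "r k = Suc k * R" for k
  have smr: "strict_mono r" unfolding r_def strict_mono_def using R by simp
  have sub: "((\<lambda>n. elog (b n) / ereal (real n)) \<circ> r) k = ereal (ln (c 0) / R / real (Suc k) + L / R)" for k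
  proof -
    have bn: "b (r k) = e ^ Suc k * c 0" using b R unfolding r_def by simp
    have "b (r k) > 0" using bn epos c0 by simp
    moreover have "ln (b (r k)) = real (Suc k) * L + ln (c 0)"
      unfolding bn L_def using epos c0 by (simp add: ln_mult ln_realpow algebra_simps)
    moreover have "real (r k) = real (Suc k) * R" unfolding r_def by (simp add: algebra_simps)
    ultimately show ?thesis using Rpos
      by (simp add: elog_def field_simps del: of_nat_Suc)
  qed
  have lim2: "((\<lambda>n. elog (b n) / ereal (real n)) \<circ> r) \<longlonglongrightarrow> ereal (L / R)"
  proof -
    have "(\<lambda>k. ln (c 0) / R / real (Suc k) + L / R) \<longlonglongrightarrow> 0 + L / R"
      by (intro tendsto_add tendsto_const LIMSEQ_Suc[OF lim_const_over_n])
    then show ?thesis unfolding sub by (intro tendsto_ereal) simp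
  qed
  have "ereal (L / R) = limsup ((\<lambda>n. elog (b n) / ereal (real n)) \<circ> r)"
    by (rule lim_imp_Limsup[OF _ lim2, symmetric]) simp
  also have "\<dots> \<le> limsup (\<lambda>n. elog (b n) / ereal (real n))"
    by (rule limsup_subseq_mono[OF smr])
  finally show ?thesis using le rhs by simp
qed


lemma PFn_period:
  assumes "\<forall>k. \<omega> (k + int R) = \<omega> k"
  shows "PFn T \<omega> (n + R) f = PFn T \<omega> n (PFn T \<omega> R f)"
proof -
  have "(\<lambda>k. \<omega> (k + int R)) = \<omega>" using assms by auto
  then show ?thesis using PFn_add[of T \<omega> n R f] by simp
qed

lemma eig_iter:
  assumes per: "\<forall>k. \<omega> (k + int R) = \<omega> k"
    and ev: "AE x in mI. PFn T \<omega> R f x = \<eta> * f x"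
  shows "AE x in mI. PFn T \<omega> (j + k * R) f x = \<eta> ^ k * PFn T \<omega> j f x"
proof (induction k)
  case 0 then show ?case by simp
next
  case (Suc k)
  define m where "m = j + k * R"
  have eq: "j + Suc k * R = m + R" unfolding m_def by simp
  have "AE x in mI. PFn T \<omega> m (PFn T \<omega> R f) x = PFn T \<omega> m (\<lambda>x. \<eta> * f x) x"
    by (rule PFn_AE[OF ev])
  moreover have "AE x in mI. PFn T \<omega> m f x = \<eta> ^ k * PFn T \<omega> j f x"
    using Suc unfolding m_def .
  ultimately show ?case unfolding eq PFn_period[OF per] PFn_scale
    by eventually_elim simp
qed

theorem lemma2:
  fixes T :: "nat \<Rightarrow> real \<Rightarrow> real" and K R :: nat and \<omega> :: "int \<Rightarrow> nat" and \<eta> :: real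
  assumes maps: "\<forall>i<K. expanding_map (T i)"
    and symb: "\<forall>k. \<omega> k < K"
    and R: "R \<ge> 1"
    and periodic: "\<forall>k. \<omega> (k + int R) = \<omega> k"
    and eig: "\<exists>f. BV f \<and> \<not> (AE x in mI. f x = 0) \<and>
                  (AE x in mI. PFn T \<omega> R f x = \<eta> * f x)"
  shows "elog \<bar>\<eta>\<bar> / ereal (real R) \<in> lyap_spectrum T \<omega>"
proof -
  obtain f where f: "BV f" "\<not> (AE x in mI. f x = 0)" "AE x in mI. PFn T \<omega> R f x = \<eta> * f x"
    using eig by blast
  define c where "c j = bvnorm (PFn T \<omega> j f)" for j
  have b: "bvnorm (PFn T \<omega> n f) = \<bar>\<eta>\<bar> ^ (n div R) * c (n mod R)" for n
  proof -
    have n: "n = n mod R + (n div R) * R" by simp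
    have "bvnorm (PFn T \<omega> n f) = bvnorm (\<lambda>x. \<eta> ^ (n div R) * PFn T \<omega> (n mod R) f x)"
      by (subst n, rule bvnorm_AE[OF eig_iter[OF periodic f(3)]])
    then show ?thesis unfolding c_def by (simp add: bvnorm_scale power_abs)
  qed
  have c0: "0 < c 0"
  proof -
    have fm: "f \<in> borel_measurable mI" and bd: "\<exists>C. AE x in mI. \<bar>f x\<bar> \<le> C"
      using f(1) unfolding BV_def by auto
    obtain C where C: "AE x in mI. \<bar>f x\<bar> \<le> C" using bd by blast
    have fin: "finite_measure mI" by (rule finite_measure_lebesgue_on) simp
    have int: "integrable mI (\<lambda>x. \<bar>f x\<bar>)"
      by (rule finite_measure.integrable_const_bound[OF fin, where B=C]) (use C fm in auto)
    have "L1norm f \<noteq> 0"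
    proof
      assume "L1norm f = 0"
      then have "AE x in mI. \<bar>f x\<bar> = 0"
        unfolding L1norm_def using integral_nonneg_eq_0_iff_AE[OF int] by auto
      then show False using f(2) by auto
    qed
    then have "0 < L1norm f" using L1norm_nonneg[of f] by linarith
    then show ?thesis unfolding c_def bvnorm_def by simp
  qed
  have "limsup (\<lambda>n. elog (bvnorm (PFn T \<omega> n f)) / ereal (real n)) = elog \<bar>\<eta>\<bar> / ereal (real R)"
    by (rule limsup_lemma[OF R _ c0 _ b]) (auto simp: c_def bvnorm_nonneg)
  then show ?thesis unfolding lyap_spectrum_def using f(1) by force
qed

end
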